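(* Let $\mathcal{A}$ be a subring of the algebraic integers (not necessarily closed under complex conjugation). Let $\{\mathcal{W}_i\}_{i=1}^n$ be an equichordal tight fusion frame consisting of $n$ subspaces of dimension $m$ of $\mathbb{F}^k$ ($\mathbb{F}=\mathbb{R}$ or $\mathbb{C}$), with associated orthogonal projections $\{P_i\}_{i=1}^n$. If for all $i\in[n]$ the entries of $kP_i$ lie in $\mathcal{A}$, then \[ \frac{km(mn-k)}{n-1}\in\mathbb{Z}. \]
   Context: The algebraic integers are the complex roots of monic polynomials with integer coefficients. A collection of $m$-dimensional subspaces $\{\mathcal{W}_i\}_{i=1}^n$ of $\mathbb{F}^k$ with orthogonal projections $P_i$ is a tight fusion frame if $\sum_{i=1}^nP_i=AI_k$ for some $A>0$, and equichordal if $\operatorname{trace}(P_iP_j)$ is the same for all $i\neq j$. *)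

theory Defs
  imports "HOL-Computational_Algebra.Polynomial" "Jordan_Normal_Form.DL_Rank"
          "Jordan_Normal_Form.Schur_Decomposition"
begin

definition subring_of_algebraic_integers :: "complex set \<Rightarrow> bool" where
  "subring_of_algebraic_integers R \<longleftrightarrow>
     R \<subseteq> {x. algebraic_int x} \<and> 0 \<in> R \<and> 1 \<in> R \<and>
     (\<forall>x\<in>R. \<forall>y\<in>R. x + y \<in> R \<and> x * y \<in> R \<and> - x \<in> R)"

definition orth_proj :: "nat \<Rightarrow> nat \<Rightarrow> complex mat \<Rightarrow> bool" where
  "orth_proj k m P \<longleftrightarrow> P \<in> carrier_mat k k \<and> P * P = P \<and> mat_adjoint P = P
     \<and> vec_space.rank k P = m"

definition tight_fusion_frame :: "nat \<Rightarrow> nat \<Rightarrow> nat \<Rightarrow> (nat \<Rightarrow> complex mat) \<Rightarrow> bool" where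
  "tight_fusion_frame k m n P \<longleftrightarrow>
     (\<forall>i<n. orth_proj k m (P i)) \<and>
     (\<exists>A::real. A > 0 \<and> (\<forall>r<k. \<forall>s<k.
        (\<Sum>i<n. P i $$ (r, s)) = (if r = s then complex_of_real A else 0)))"

definition mat_trace :: "complex mat \<Rightarrow> complex" where
  "mat_trace A = (\<Sum>i<dim_row A. A $$ (i, i))"

definition equichordal :: "nat \<Rightarrow> (nat \<Rightarrow> complex mat) \<Rightarrow> bool" where
  "equichordal n P \<longleftrightarrow> (\<exists>c. \<forall>i<n. \<forall>j<n. i \<noteq> j \<longrightarrow> mat_trace (P i * P j) = c)"

end

theory Submission
  imports Defs
begin


context vec_space
begin

lemma idem_col_fix:
  assumes P: "P \<in> carrier_mat n n" and PP: "P * P = P" and v: "v \<in> set (cols P)"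
  shows "P *\<^sub>v v = v"
proof -
  obtain j where j: "j < n" "v = col P j" using v P
    by (metis cols_length cols_nth in_set_conv_nth carrier_matD(2))
  have "P *\<^sub>v col P j = col (P * P) j" by (rule col_mult2[OF P P j(1), symmetric])
  then show ?thesis using PP j by simp
qed

lemma basis_of_cols:
  assumes P: "P \<in> carrier_mat n n"
  obtains S where "S \<subseteq> set (cols P)" "lin_indpt S" "finite S" "rank P = card S"
    "\<And>v. v \<in> set (cols P) \<Longrightarrow> v \<in> span S"
proof -
  obtain S where max: "maximal S (\<lambda>T. T \<subseteq> set (cols P) \<and> lin_indpt T)"
    using maximal_exists[of "(\<lambda>T. T \<subseteq> set (cols P) \<and> lin_indpt T)" "card (set (cols P))" "{}"]
    by (meson List.finite_set card_mono empty_iff empty_subsetI finite_lin_indpt2 rev_finite_subset)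
  have S: "S \<subseteq> set (cols P)" "lin_indpt S" using max unfolding maximal_def by auto
  have fin: "finite S" using S(1) finite_subset by blast
  have car: "set (cols P) \<subseteq> carrier_vec n" using P cols_dim by blast
  have sp: "v \<in> span S" if v: "v \<in> set (cols P)" for v
  proof (cases "v \<in> S")
    case True then show ?thesis using in_own_span[of S] S car by blast
  next
    case False
    have "lin_dep (S \<union> {v})"
    proof (rule ccontr)
      assume "\<not> lin_dep (S \<union> {v})"
      then have "S \<union> {v} = S" using max v S unfolding maximal_def by blast
      then show False using False by auto
    qed
    then show ?thesis using lin_dep_iff_in_span[of S v] S car v False by auto
  qed
  show ?thesis using that S fin sp rank_card_indpt[OF P max] by blast
qed

lemma trace_mult_comm:
  fixes B C :: "'a mat"
  assumes B: "B \<in> carrier_mat n r" and C: "C \<in> carrier_mat r n"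
  shows "(\<Sum>i<n. (B * C) $$ (i,i)) = (\<Sum>l<r. (C * B) $$ (l,l))"
proof -
  have "(\<Sum>i<n. (B * C) $$ (i,i)) = (\<Sum>i<n. \<Sum>l<r. B $$ (i,l) * C $$ (l,i))"
    using B C by (intro sum.cong) (auto simp: scalar_prod_def lessThan_atLeast0)
  also have "\<dots> = (\<Sum>l<r. \<Sum>i<n. C $$ (l,i) * B $$ (i,l))"
    by (subst sum.swap) (simp add: mult.commute[of "B $$ _"])
  also have "\<dots> = (\<Sum>l<r. (C * B) $$ (l,l))"
    using B C by (intro sum.cong) (auto simp: scalar_prod_def lessThan_atLeast0)
  finally show ?thesis .
qed

lemma trace_idem_rank:
  assumes P: "P \<in> carrier_mat n n" and PP: "P * P = P"
  shows "(\<Sum>i<n. P $$ (i,i)) = of_nat (rank P)"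
proof -
  obtain S where S: "S \<subseteq> set (cols P)" "lin_indpt S" "finite S" "rank P = card S"
    and sp: "\<And>v. v \<in> set (cols P) \<Longrightarrow> v \<in> span S"
    using basis_of_cols[OF P] by blast
  obtain bs where bs: "set bs = S" "distinct bs" using S(3) finite_distinct_list by blast
  define r where "r = length bs"
  have rS: "rank P = r" using S(4) bs distinct_card r_def by metis
  have car: "set (cols P) \<subseteq> carrier_vec n" using P cols_dim by blast
  have bsc: "set bs \<subseteq> carrier_vec n" using bs S car by blast
  define B where "B = mat_of_cols n bs"
  have B: "B \<in> carrier_mat n r" unfolding B_def r_def by simp
  have colsB: "cols B = bs" unfolding B_def using bsc by (simp add: cols_mat_of_cols)
  have "\<exists>x. x \<in> carrier_vec r \<and> col P j = B *\<^sub>v x" if j: "j < n" for j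
  proof -
    have "col P j \<in> set (cols P)" using j P by (metis cols_length cols_nth nth_mem carrier_matD(2))
    then have "col P j \<in> span (set bs)" using sp bs by auto
    then have "col P j \<in> span_list bs" using span_list_as_span[OF bsc] by simp
    then obtain c where "col P j = lincomb_list c bs" unfolding span_list_def by auto
    also have "\<dots> = B *\<^sub>v vec r c" unfolding B_def r_def
      using bsc by (intro lincomb_list_as_mat_mult) auto
    finally show ?thesis by (intro exI[of _ "vec r c"]) auto
  qed
  then obtain X where X: "\<And>j. j < n \<Longrightarrow> X j \<in> carrier_vec r \<and> col P j = B *\<^sub>v X j" by metis
  define C where "C = mat_of_cols r (map X [0..<n])"
  have C: "C \<in> carrier_mat r n" unfolding C_def
    using mat_of_cols_carrier(1)[of r "map X [0..<n]"] by simp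
  have colC: "col C j = X j" if "j < n" for j
    unfolding C_def using that X by (simp add: col_mat_of_cols)
  have PBC: "P = B * C"
  proof (rule eq_matI)
    fix i j assume i: "i < dim_row (B * C)" and j: "j < dim_col (B * C)"
    then have ij: "i < n" "j < n" using B C by auto
    have "(B * C) $$ (i,j) = (B *\<^sub>v col C j) $ i" using ij B C by simp
    also have "\<dots> = col P j $ i" using X[OF ij(2)] colC[OF ij(2)] by simp
    also have "\<dots> = P $$ (i,j)" using ij P by simp
    finally show "P $$ (i,j) = (B * C) $$ (i,j)" by simp
  qed (use P B C in auto)
  have PB: "P * B = B"
  proof (rule eq_matI)
    fix i l assume i: "i < dim_row B" and l: "l < dim_col B"
    then have il: "i < n" "l < r" using B by auto
    have bl: "col B l \<in> set (cols P)" using colsB il S bs B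
      by (metis carrier_matD(2) cols_length cols_nth nth_mem subsetD)
    have "(P * B) $$ (i,l) = (P *\<^sub>v col B l) $ i" using il P B by simp
    also have "\<dots> = col B l $ i" using idem_col_fix[OF P PP bl] by simp
    finally show "(P * B) $$ (i,l) = B $$ (i,l)" using il B by simp
  qed (use P B in auto)
  have BCB: "B * (C * B) = B"
  proof -
    have "B * (C * B) = (B * C) * B" by (rule assoc_mult_mat[symmetric, OF B C B])
    also have "\<dots> = P * B" using PBC by simp
    finally show ?thesis using PB by simp
  qed
  have CB: "C * B = 1\<^sub>m r"
  proof (rule eq_matI)
    fix a l assume a: "a < dim_row (1\<^sub>m r)" and l: "l < dim_col (1\<^sub>m r)"
    then have al: "a < r" "l < r" by auto
    define y where "y = col (C * B) l - unit_vec r l"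
    have yc: "y \<in> carrier_vec r" unfolding y_def using C B by (intro carrier_vecI) simp
    have "B *\<^sub>v y = B *\<^sub>v col (C * B) l - B *\<^sub>v unit_vec r l"
      unfolding y_def using B C al by (intro mult_minus_distrib_mat_vec) auto
    also have "B *\<^sub>v col (C * B) l = col (B * (C * B)) l"
      by (rule col_mult2[OF B mult_carrier_mat[OF C B] al(2), symmetric])
    also have "\<dots> = col B l" using BCB by simp
    also have "B *\<^sub>v unit_vec r l = col B l" using B al by (intro eq_vecI) auto
    finally have By: "B *\<^sub>v y = 0\<^sub>v n" using B al by simp
    have "y = 0\<^sub>v r"
    proof (rule ccontr)
      assume "y \<noteq> 0\<^sub>v r"
      from lin_depI[OF B yc this By] colsB bs S show False by simp
    qed
    then have "y $ a = 0" using al by simp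
    moreover have "y $ a = (C * B) $$ (a,l) - unit_vec r l $ a" unfolding y_def using al C B by simp
    ultimately show "(C * B) $$ (a,l) = 1\<^sub>m r $$ (a,l)" using al by simp
  qed (use B C in auto)
  have "(\<Sum>i<n. P $$ (i,i)) = (\<Sum>l<r. (C * B) $$ (l,l))"
    using trace_mult_comm[OF B C] PBC by simp
  also have "\<dots> = of_nat r" using CB by simp
  finally show ?thesis using rS by simp
qed

end


lemma subring_sum:
  assumes R: "subring_of_algebraic_integers R" and fin: "finite F"
    and f: "\<And>x. x \<in> F \<Longrightarrow> f x \<in> R"
  shows "sum f F \<in> R"
  using fin f
proof (induction F rule: finite_induct)
  case empty then show ?case using R unfolding subring_of_algebraic_integers_def by simp
next
  case (insert x F) then show ?case using R unfolding subring_of_algebraic_integers_def by simp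
qed

lemma trace_orth_proj:
  assumes "orth_proj k m Q"
  shows "mat_trace Q = of_nat m"
proof -
  have Q: "Q \<in> carrier_mat k k" "Q * Q = Q" "vec_space.rank k Q = m"
    using assms unfolding orth_proj_def by auto
  have "(\<Sum>i<k. Q $$ (i,i)) = of_nat (vec_space.rank k Q)"
    using Q by (intro vec_space.trace_idem_rank) auto
  then show ?thesis using Q unfolding mat_trace_def by simp
qed

lemma trace_prod:
  assumes "Q \<in> carrier_mat k k" "R \<in> carrier_mat k k"
  shows "mat_trace (Q * R) = (\<Sum>r<k. \<Sum>s<k. Q $$ (r,s) * R $$ (s,r))"
  unfolding mat_trace_def using assms
  by (intro sum.cong) (auto simp: scalar_prod_def lessThan_atLeast0)

theorem mainTheorem3:
  fixes \<A> :: "complex set" and k m n :: nat and P :: "nat \<Rightarrow> complex mat"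
  assumes "subring_of_algebraic_integers \<A>"
    and "tight_fusion_frame k m n P"
    and "equichordal n P"
    and "\<forall>i<n. \<forall>r<k. \<forall>s<k. of_nat k * P i $$ (r, s) \<in> \<A>"
  shows "(of_int (int k * int m * (int m * int n - int k)) / of_int (int n - 1) :: real) \<in> \<int>"
proof (cases "n \<le> 1")
  case True
  then have "n = 0 \<or> n = 1" by auto
  then show ?thesis by auto
next
  case False
  then have n2: "n \<ge> 2" by simp
  have orth: "\<And>i. i < n \<Longrightarrow> orth_proj k m (P i)" using assms(2) unfolding tight_fusion_frame_def by auto
  obtain A :: real where hsum: "\<And>r s. r < k \<Longrightarrow> s < k \<Longrightarrow>
      (\<Sum>i<n. P i $$ (r, s)) = (if r = s then complex_of_real A else 0)"
    using assms(2) unfolding tight_fusion_frame_def by auto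
  obtain c where c: "\<And>i j. i < n \<Longrightarrow> j < n \<Longrightarrow> i \<noteq> j \<Longrightarrow> mat_trace (P i * P j) = c"
    using assms(3) unfolding equichordal_def by auto
  have car: "\<And>i. i < n \<Longrightarrow> P i \<in> carrier_mat k k" using orth unfolding orth_proj_def by auto
  have idem: "\<And>i. i < n \<Longrightarrow> P i * P i = P i" using orth unfolding orth_proj_def by auto
  have tr: "\<And>i. i < n \<Longrightarrow> mat_trace (P i) = of_nat m" using orth trace_orth_proj by auto
  have n0: "0 < n" "1 < n" using n2 by auto
  have "(\<Sum>i<n. mat_trace (P i)) = (\<Sum>i<n. \<Sum>r<k. P i $$ (r,r))"
    using car unfolding mat_trace_def by (intro sum.cong) auto
  also have "\<dots> = (\<Sum>r<k. \<Sum>i<n. P i $$ (r,r))" by (rule sum.swap)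
  also have "\<dots> = (\<Sum>r<k. complex_of_real A)" using hsum by (intro sum.cong) auto
  finally have eq1: "of_nat n * of_nat m = of_nat k * complex_of_real A" using tr by simp
  have "(\<Sum>j<n. mat_trace (P 0 * P j)) = (\<Sum>j<n. \<Sum>r<k. \<Sum>s<k. P 0 $$ (r,s) * P j $$ (s,r))"
    using car n0 by (intro sum.cong) (auto simp: trace_prod)
  also have "\<dots> = (\<Sum>r<k. \<Sum>j<n. \<Sum>s<k. P 0 $$ (r,s) * P j $$ (s,r))" by (rule sum.swap)
  also have "\<dots> = (\<Sum>r<k. \<Sum>s<k. \<Sum>j<n. P 0 $$ (r,s) * P j $$ (s,r))" by (intro sum.cong refl sum.swap)
  also have "\<dots> = (\<Sum>r<k. \<Sum>s<k. P 0 $$ (r,s) * (\<Sum>j<n. P j $$ (s,r)))"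
    by (simp add: sum_distrib_left)
  also have "\<dots> = (\<Sum>r<k. \<Sum>s<k. P 0 $$ (r,s) * (if s = r then complex_of_real A else 0))"
    using hsum by (intro sum.cong refl) auto
  also have "\<dots> = (\<Sum>r<k. P 0 $$ (r,r) * complex_of_real A)"
    by (intro sum.cong refl) (simp add: if_distrib sum.delta cong: if_cong)
  also have "\<dots> = complex_of_real A * of_nat m"
    using tr[OF n0(1)] car[OF n0(1)] unfolding mat_trace_def by (simp add: sum_distrib_right[symmetric])
  finally have eq2a: "(\<Sum>j<n. mat_trace (P 0 * P j)) = complex_of_real A * of_nat m" .
  have "{..<n} = insert 0 {1..<n}" using n0 by auto
  then have "(\<Sum>j<n. mat_trace (P 0 * P j)) = mat_trace (P 0 * P 0) + (\<Sum>j\<in>{1..<n}. mat_trace (P 0 * P j))"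
    by simp
  also have "\<dots> = of_nat m + (\<Sum>j\<in>{1..<n}. c)"
    using idem[OF n0(1)] tr[OF n0(1)] c n0 by (intro arg_cong2[where f="(+)"] sum.cong) auto
  finally have eq2: "complex_of_real A * of_nat m = of_nat m + of_nat (n - 1) * c" using eq2a by simp
  define z where "z = of_nat k * of_nat k * c"
  have zint: "z * of_int (int n - 1) = of_int (int k * int m * (int m * int n - int k))"
  proof -
    have nn: "of_int (int n - 1) = (of_nat (n - 1) :: complex)" using n0 by (simp add: of_nat_diff)
    have "z * of_int (int n - 1) = of_nat k * of_nat k * (of_nat (n - 1) * c)" unfolding z_def nn by simp
    also have "\<dots> = of_nat k * of_nat m * (of_nat k * complex_of_real A) - of_nat k * of_nat k * of_nat m"
      using eq2 by (simp add: algebra_simps)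
    also have "\<dots> = of_nat k * of_nat m * (of_nat n * of_nat m) - of_nat k * of_nat k * of_nat m"
      using eq1 by simp
    also have "\<dots> = of_int (int k * int m * (int m * int n - int k))" by (simp add: algebra_simps)
    finally show ?thesis .
  qed
  have zA: "z \<in> \<A>"
  proof -
    have "z = of_nat k * of_nat k * mat_trace (P 0 * P 1)" unfolding z_def using c n0 by simp
    also have "\<dots> = (\<Sum>r<k. \<Sum>s<k. (of_nat k * P 0 $$ (r,s)) * (of_nat k * P 1 $$ (s,r)))"
      using trace_prod[OF car[OF n0(1)] car[OF n0(2)]] by (simp add: sum_distrib_left algebra_simps)
    finally have zeq: "z = \<dots>" .
    show ?thesis unfolding zeq
      using assms(4) n0 assms(1)
      by (intro subring_sum[OF assms(1)]) (auto simp: subring_of_algebraic_integers_def)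
  qed
  have alg: "algebraic_int z" using zA assms(1) unfolding subring_of_algebraic_integers_def by auto
  define q :: real where "q = of_int (int k * int m * (int m * int n - int k)) / of_int (int n - 1)"
  have nz: "(of_int (int n - 1) :: complex) \<noteq> 0" using n0 by simp
  have zexpr: "z = of_int (int k * int m * (int m * int n - int k)) / of_int (int n - 1)"
      using zint nz by (simp add: eq_divide_eq)
  have zq: "z = complex_of_real q"
    unfolding zexpr q_def by simp
  have "z \<in> \<rat>" unfolding zexpr by simp
  then have "z \<in> \<int>" using rational_algebraic_int_is_int alg by blast
  then obtain t where "z = of_int t" by (auto elim: Ints_cases)
  then have "q = of_int t" using zq by (metis of_real_eq_iff of_real_of_int_eq)
  then show ?thesis unfolding q_def by simp
qed

end
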